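(* Let $G=(V,E)$ be a locally finite graph without isolated edge, and let $L=\{L_v:v\in V\}\cup\{L_e:e\in E\}$ be a set of lists of weights for $G$. For a subgraph $H$ of $G$, let $L_H$ denote the restriction of $L$ to $V(H)\cup E(H)$. If every finite induced subgraph $H$ of $G$ that is not isomorphic to $K_2$ has an $L_H$-weighting, then $G$ has an $L$-weighting.
   Context: Graphs are simple and may be infinite; locally finite means every vertex has finite degree; an isolated edge is a connected component isomorphic to $K_2$. Each list is a finite subset of $\{1,\dots,k\}$ for some natural number $k$. For a graph $F$ and a set of lists $M=\{M_v:v\in V(F)\}\cup\{M_e:e\in E(F)\}$, a weighting of $F$ from $M$ is a function $\omega\colon V(F)\cup E(F)\to\mathbb{Z}_{>0}$ with $\omega(v)\in M_v$ and $\omega(e)\in M_e$ for all vertices $v$ and edges $e$ of $F$. The weighted degree of a vertex $v$ in $F$ is $s_\omega(v)=\sum_{w\in N_F(v)}\omega(vw)+\omega(v)$. An $M$-weighting of $F$ is a weighting $\omega$ of $F$ from $M$ such that $s_\omega(u)\neq s_\omega(v)$ for every edge $uv$ of $F$. *)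

theory Defs
  imports Main
begin

definition simple_graph :: "'a set \<Rightarrow> 'a set set \<Rightarrow> bool" where
  "simple_graph V E \<longleftrightarrow> (\<forall>e\<in>E. \<exists>u v. u \<noteq> v \<and> u \<in> V \<and> v \<in> V \<and> e = {u, v})"

definition nbrs :: "'a set set \<Rightarrow> 'a \<Rightarrow> 'a set" where
  "nbrs E v = {u. {u, v} \<in> E}"

definition locally_finite :: "'a set \<Rightarrow> 'a set set \<Rightarrow> bool" where
  "locally_finite V E \<longleftrightarrow> (\<forall>v\<in>V. finite (nbrs E v))"

text \<open>An isolated edge: a connected component isomorphic to K2.\<close>
definition no_isolated_edge :: "'a set set \<Rightarrow> bool" where
  "no_isolated_edge E \<longleftrightarrow> \<not> (\<exists>u v. {u, v} \<in> E \<and> nbrs E u = {v} \<and> nbrs E v = {u})"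

definition induced_edges :: "'a set set \<Rightarrow> 'a set \<Rightarrow> 'a set set" where
  "induced_edges E S = {e \<in> E. e \<subseteq> S}"

definition is_K2 :: "'a set \<Rightarrow> 'a set set \<Rightarrow> bool" where
  "is_K2 V E \<longleftrightarrow> (\<exists>u v. u \<noteq> v \<and> V = {u, v} \<and> E = {{u, v}})"

definition wdeg :: "'a set set \<Rightarrow> ('a \<Rightarrow> nat) \<Rightarrow> ('a set \<Rightarrow> nat) \<Rightarrow> 'a \<Rightarrow> nat" where
  "wdeg E wv we v = (\<Sum>u\<in>nbrs E v. we {v, u}) + wv v"

definition is_L_weighting ::
  "'a set \<Rightarrow> 'a set set \<Rightarrow> ('a \<Rightarrow> nat set) \<Rightarrow> ('a set \<Rightarrow> nat set) \<Rightarrow> ('a \<Rightarrow> nat) \<Rightarrow> ('a set \<Rightarrow> nat) \<Rightarrow> bool" where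
  "is_L_weighting V E Lv Le wv we \<longleftrightarrow>
     (\<forall>v\<in>V. wv v \<in> Lv v) \<and> (\<forall>e\<in>E. we e \<in> Le e) \<and>
     (\<forall>u v. {u, v} \<in> E \<longrightarrow> wdeg E wv we u \<noteq> wdeg E wv we v)"

end

theory Submission
  imports Defs "HOL-Analysis.Analysis"
begin

lemma wdeg_cong:
  assumes "nbrs E' u = nbrs E u" "\<And>x. x \<in> nbrs E u \<Longrightarrow> we' {u,x} = we {u,x}" "wv' u = wv u"
  shows "wdeg E' wv' we' u = wdeg E wv we u"
  unfolding wdeg_def using assms by (auto intro: sum.cong)

lemma nbrs_induced:
  assumes "nbrs E u \<subseteq> S" "u \<in> S"
  shows "nbrs (induced_edges E S) u = nbrs E u"
  using assms unfolding nbrs_def induced_edges_def by auto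

lemma edge_nbrs: "{u,v} \<in> E \<Longrightarrow> v \<in> nbrs E u"
  unfolding nbrs_def by (simp add: insert_commute)

lemma no_loop: "simple_graph V E \<Longrightarrow> u \<notin> nbrs E u"
  unfolding simple_graph_def nbrs_def
  by (smt (verit, ccfv_threshold) doubleton_eq_iff insert_absorb2 mem_Collect_eq)

lemma edge_in_V: "simple_graph V E \<Longrightarrow> {u,v} \<in> E \<Longrightarrow> u \<in> V \<and> v \<in> V"
  unfolding simple_graph_def by (metis doubleton_eq_iff)

lemma key_S:
  fixes V :: "'a set" and E :: "'a set set"
  assumes sg: "simple_graph V E"
    and lf: "locally_finite V E"
    and ni: "no_isolated_edge E"
    and H: "\<forall>S. S \<subseteq> V \<longrightarrow> finite S \<longrightarrow> \<not> is_K2 S (induced_edges E S) \<longrightarrow>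
           (\<exists>wv we. is_L_weighting S (induced_edges E S) Lv Le wv we)"
    and P: "finite P" "P \<subseteq> {(u,v). {u,v} \<in> E}"
  defines "W \<equiv> fst ` P \<union> snd ` P"
  defines "S \<equiv> W \<union> \<Union>(nbrs E ` W)"
  shows "finite S" "S \<subseteq> V" "\<exists>wv we. is_L_weighting S (induced_edges E S) Lv Le wv we"
    "\<And>u. u \<in> W \<Longrightarrow> nbrs E u \<subseteq> S \<and> u \<in> S"
proof -
  have WV: "W \<subseteq> V" using P(2) edge_in_V[OF sg] unfolding W_def by fastforce
  show "finite S" unfolding S_def W_def using P(1) lf WV unfolding locally_finite_def W_def by auto
  have "\<And>x u. u \<in> V \<Longrightarrow> x \<in> nbrs E u \<Longrightarrow> x \<in> V"
    using edge_in_V[OF sg] unfolding nbrs_def by blast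
  then show SV: "S \<subseteq> V" unfolding S_def using WV by blast
  show loc: "\<And>u. u \<in> W \<Longrightarrow> nbrs E u \<subseteq> S \<and> u \<in> S" unfolding S_def by blast
  have "\<not> is_K2 S (induced_edges E S)"
  proof
    assume "is_K2 S (induced_edges E S)"
    then obtain a b where ab: "a \<noteq> b" "S = {a,b}" unfolding is_K2_def by blast
    show False
    proof (cases "P = {}")
      case True then show False using ab unfolding S_def W_def by auto
    next
      case False
      then obtain u v where uv: "(u,v) \<in> P" by auto
      then have e: "{u,v} \<in> E" using P(2) by auto
      have uvW: "u \<in> W" "v \<in> W" using uv unfolding W_def by force+
      have "u \<noteq> v" using no_loop[OF sg, of u] edge_nbrs[OF e] by auto
      then have Suv: "S = {u,v}" using ab loc[OF uvW(1)] loc[OF uvW(2)] by auto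
      have "nbrs E u = {v}" using loc[OF uvW(1)] no_loop[OF sg, of u] edge_nbrs[OF e] Suv by auto
      moreover have "nbrs E v = {u}" using loc[OF uvW(2)] no_loop[OF sg, of v]
          edge_nbrs[of v u E] e Suv by (auto simp: insert_commute)
      ultimately show False using ni e unfolding no_isolated_edge_def by blast
    qed
  qed
  then show "\<exists>wv we. is_L_weighting S (induced_edges E S) Lv Le wv we"
    using H SV \<open>finite S\<close> by blast
qed


theorem lemma6:
  fixes V :: "'a set" and E :: "'a set set"
    and Lv :: "'a \<Rightarrow> nat set" and Le :: "'a set \<Rightarrow> nat set" and k :: nat
  assumes "simple_graph V E"
    and "locally_finite V E"
    and "no_isolated_edge E"
    and "\<forall>v\<in>V. Lv v \<subseteq> {1..k}"
    and "\<forall>e\<in>E. Le e \<subseteq> {1..k}"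
    and "\<forall>S. S \<subseteq> V \<longrightarrow> finite S \<longrightarrow> \<not> is_K2 S (induced_edges E S) \<longrightarrow>
           (\<exists>wv we. is_L_weighting S (induced_edges E S) Lv Le wv we)"
  shows "\<exists>wv we. is_L_weighting V E Lv Le wv we"
proof -
  note sg = assms(1) and lf = assms(2) and ni = assms(3) and H = assms(6)
  define L :: "'a + 'a set \<Rightarrow> nat set" where "L i = (case i of Inl v \<Rightarrow> Lv v | Inr e \<Rightarrow> Le e)" for i
  define I where "I = Inl ` V \<union> Inr ` E"
  define X where "X = product_topology (\<lambda>i. discrete_topology (L i)) I"
  define D where "D f = wdeg E (\<lambda>v. f (Inl v)) (\<lambda>e. f (Inr e))" for f :: "'a + 'a set \<Rightarrow> nat"
  define C where "C u v = {f \<in> topspace X. D f u \<noteq> D f v}" for u v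
  define \<U> where "\<U> = insert (topspace X) ((\<lambda>(u,v). C u v) ` {(u,v). {u,v} \<in> E})"
  have topX: "topspace X = Pi\<^sub>E I L" unfolding X_def by simp
  have finL: "finite (L i)" if "i \<in> I" for i
    using that assms(4,5) unfolding I_def L_def
    by (auto simp del: One_nat_def atLeastAtMost_iff) (meson finite_atLeastAtMost finite_subset)+
  have cX: "compact_space X"
    unfolding X_def compact_space_product_topology
    using finL by (simp add: compact_space_discrete_topology)
  have Lv_ne: "Lv v \<noteq> {}" if "v \<in> V" for v
  proof -
    have "\<not> is_K2 {v} (induced_edges E {v})"
    proof
      assume "is_K2 {v} (induced_edges E {v})"
      then obtain a b where "a \<noteq> b" "{v} = {a,b}" unfolding is_K2_def by blast
      then show False by (metis insertI1 insert_commute singletonD)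
    qed
    then obtain wv we where "is_L_weighting {v} (induced_edges E {v}) Lv Le wv we"
      using H[rule_format, of "{v}"] \<open>v \<in> V\<close> by blast
    then show ?thesis unfolding is_L_weighting_def by auto
  qed
  have Le_ne: "Le e \<noteq> {}" if "e \<in> E" for e
  proof -
    obtain u v where e: "e = {u,v}" using sg \<open>e \<in> E\<close> unfolding simple_graph_def by blast
    let ?P = "{(u,v)}"
    have P: "finite ?P" "?P \<subseteq> {(u,v). {u,v} \<in> E}" using that e by auto
    note K = key_S[OF sg lf ni H P]
    obtain wv we where w: "is_L_weighting (fst ` ?P \<union> snd ` ?P \<union> \<Union>(nbrs E ` (fst ` ?P \<union> snd ` ?P)))
        (induced_edges E (fst ` ?P \<union> snd ` ?P \<union> \<Union>(nbrs E ` (fst ` ?P \<union> snd ` ?P)))) Lv Le wv we"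
      using K(3) by blast
    have "e \<in> induced_edges E (fst ` ?P \<union> snd ` ?P \<union> \<Union>(nbrs E ` (fst ` ?P \<union> snd ` ?P)))"
      using that e unfolding induced_edges_def by auto
    then show ?thesis using w unfolding is_L_weighting_def by auto
  qed
  have L_ne: "L i \<noteq> {}" if "i \<in> I" for i
    using that Lv_ne Le_ne unfolding I_def L_def by auto
  have closedC: "closedin X (C u v)" if e: "{u,v} \<in> E" for u v
  proof -
    have uV: "u \<in> V" "v \<in> V" using edge_in_V[OF sg e] by auto
    have "openin X (topspace X - C u v)"
      unfolding X_def openin_product_topology_alt
    proof (intro ballI)
      fix f assume f: "f \<in> topspace (product_topology (\<lambda>i. discrete_topology (L i)) I) - C u v"
      then have fX: "f \<in> Pi\<^sub>E I L" and fD: "D f u = D f v" unfolding C_def X_def by auto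
      define J where "J = Inl ` {u,v} \<union> Inr ` ((\<lambda>x. {u,x}) ` nbrs E u \<union> (\<lambda>x. {v,x}) ` nbrs E v)"
      have finJ: "finite J" using lf uV unfolding J_def locally_finite_def by auto
      define U where "U i = (if i \<in> J then {f i} else L i)" for i
      have agree: "D g w = D f w" if "g \<in> Pi\<^sub>E I U" "w \<in> {u,v}" for g w
      proof -
        have wV: "w \<in> V" using that uV by auto
        have gU: "g i \<in> U i" if "i \<in> I" for i using \<open>g \<in> Pi\<^sub>E I U\<close> that by auto
        have "Inl w \<in> I" "Inl w \<in> J" using wV \<open>w \<in> {u,v}\<close> unfolding I_def J_def by auto
        then have "g (Inl w) = f (Inl w)" using gU[of "Inl w"] unfolding U_def by auto
        moreover have "g (Inr {w,x}) = f (Inr {w,x})" if "x \<in> nbrs E w" for x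
        proof -
          have "{w,x} \<in> E" using that unfolding nbrs_def by (simp add: insert_commute)
          then have "Inr {w,x} \<in> I" "Inr {w,x} \<in> J" using \<open>w \<in> {u,v}\<close> that unfolding I_def J_def by auto
          then show ?thesis using gU[of "Inr {w,x}"] unfolding U_def by auto
        qed
        ultimately show ?thesis unfolding D_def by (intro wdeg_cong) auto
      qed
      show "\<exists>U. finite {i \<in> I. U i \<noteq> topspace (discrete_topology (L i))} \<and>
               (\<forall>i\<in>I. openin (discrete_topology (L i)) (U i)) \<and> f \<in> Pi\<^sub>E I U \<and>
               Pi\<^sub>E I U \<subseteq> topspace (product_topology (\<lambda>i. discrete_topology (L i)) I) - C u v"
      proof (intro exI conjI)
        show "finite {i \<in> I. U i \<noteq> topspace (discrete_topology (L i))}"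
          by (rule finite_subset[OF _ finJ]) (auto simp: U_def)
        show "\<forall>i\<in>I. openin (discrete_topology (L i)) (U i)"
          using fX by (auto simp: U_def PiE_iff)
        show "f \<in> Pi\<^sub>E I U" using fX by (auto simp: U_def PiE_iff)
        show "Pi\<^sub>E I U \<subseteq> topspace (product_topology (\<lambda>i. discrete_topology (L i)) I) - C u v"
        proof
          fix g assume g: "g \<in> Pi\<^sub>E I U"
          then have "g \<in> Pi\<^sub>E I L" using fX by (auto simp: U_def PiE_iff split: if_splits)
          moreover have "D g u = D g v" using agree[OF g] fD by auto
          ultimately show "g \<in> topspace (product_topology (\<lambda>i. discrete_topology (L i)) I) - C u v"
            unfolding C_def X_def by auto
        qed
      qed
    qed
    then show ?thesis unfolding closedin_def C_def by auto
  qed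
  have closedU: "\<forall>c\<in>\<U>. closedin X c" unfolding \<U>_def using closedC by auto
  have fip: "\<Inter>\<F> \<noteq> {}" if F: "finite \<F>" "\<F> \<subseteq> \<U>" for \<F>
  proof -
    have "\<F> - {topspace X} \<subseteq> (\<lambda>(u,v). C u v) ` {(u,v). {u,v} \<in> E}" using F unfolding \<U>_def by auto
    then obtain P where P: "P \<subseteq> {(u,v). {u,v} \<in> E}" "finite P" "\<F> - {topspace X} = (\<lambda>(u,v). C u v) ` P"
      using finite_subset_image[of "\<F> - {topspace X}"] F(1) by (metis finite_Diff)
    define W where "W = fst ` P \<union> snd ` P"
    define S where "S = W \<union> \<Union>(nbrs E ` W)"
    note K = key_S[OF sg lf ni H P(2,1), folded W_def, folded S_def]
    obtain wv we where w: "is_L_weighting S (induced_edges E S) Lv Le wv we" using K(3) by blast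
    define g where "g i = (if i \<in> I then (case i of Inl v \<Rightarrow> if v \<in> S then wv v else (SOME x. x \<in> Lv v)
        | Inr e \<Rightarrow> if e \<in> induced_edges E S then we e else (SOME x. x \<in> Le e)) else undefined)" for i
    have gX: "g \<in> topspace X"
      unfolding topX
    proof (rule PiE_I)
      fix i assume i: "i \<in> I"
      show "g i \<in> L i"
      proof (cases i)
        case (Inl v)
        then have "v \<in> V" using i unfolding I_def by auto
        then show ?thesis using Inl i w Lv_ne[of v] some_in_eq
          unfolding g_def L_def is_L_weighting_def by auto
      next
        case (Inr e)
        then have "e \<in> E" using i unfolding I_def by auto
        then show ?thesis using Inr i w Le_ne[of e] some_in_eq
          unfolding g_def L_def is_L_weighting_def by auto
      qed
    qed (auto simp: g_def)
    have gC: "g \<in> C u v" if uv: "(u,v) \<in> P" for u v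
    proof -
      have e: "{u,v} \<in> E" using uv P(1) by auto
      have W: "u \<in> W" "v \<in> W" using uv unfolding W_def by force+
      have Dw: "D g w = wdeg (induced_edges E S) wv we w" if "w \<in> W" for w
      proof -
        have loc: "nbrs E w \<subseteq> S" "w \<in> S" using K(4)[OF that] by auto
        have wV: "w \<in> V" using loc K(2) by auto
        show ?thesis unfolding D_def
        proof (rule wdeg_cong[symmetric])
          show "nbrs (induced_edges E S) w = nbrs E w" using nbrs_induced[OF loc] .
          show "wv w = g (Inl w)" using loc wV unfolding g_def I_def by auto
          fix x assume x: "x \<in> nbrs E w"
          then have "{w,x} \<in> E" unfolding nbrs_def by (simp add: insert_commute)
          moreover have "{w,x} \<subseteq> S" using x loc by auto
          ultimately show "we {w,x} = g (Inr {w,x})" unfolding g_def I_def induced_edges_def by auto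
        qed
      qed
      have "{u,v} \<in> induced_edges E S" using e K(4)[OF W(1)] K(4)[OF W(2)]
        unfolding induced_edges_def by auto
      then have "wdeg (induced_edges E S) wv we u \<noteq> wdeg (induced_edges E S) wv we v"
        using w unfolding is_L_weighting_def by blast
      then show ?thesis unfolding C_def using gX Dw[OF W(1)] Dw[OF W(2)] by auto
    qed
    have "g \<in> \<Inter>\<F>"
    proof
      fix c assume c: "c \<in> \<F>"
      show "g \<in> c"
      proof (cases "c = topspace X")
        case True then show ?thesis using gX by simp
      next
        case False
        then have "c \<in> (\<lambda>(u,v). C u v) ` P" using c P(3) by blast
        then show ?thesis using gC by auto
      qed
    qed
    then show ?thesis by auto
  qed
  have "\<Inter>\<U> \<noteq> {}"
    using cX closedU fip unfolding compact_space_fip by blast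
  then obtain f where f: "f \<in> \<Inter>\<U>" by blast
  have fX: "f \<in> Pi\<^sub>E I L" using f topX unfolding \<U>_def by auto
  have fC: "f \<in> C u v" if "{u,v} \<in> E" for u v using f that unfolding \<U>_def by auto
  show ?thesis
  proof (intro exI)
    show "is_L_weighting V E Lv Le (\<lambda>v. f (Inl v)) (\<lambda>e. f (Inr e))"
      unfolding is_L_weighting_def
    proof (intro conjI ballI allI impI)
      fix v assume "v \<in> V" then show "f (Inl v) \<in> Lv v" using PiE_mem[OF fX, of "Inl v"] unfolding I_def L_def by auto
    next
      fix e assume "e \<in> E" then show "f (Inr e) \<in> Le e" using PiE_mem[OF fX, of "Inr e"] unfolding I_def L_def by auto
    next
      fix u v assume "{u,v} \<in> E"
      then show "wdeg E (\<lambda>v. f (Inl v)) (\<lambda>e. f (Inr e)) u \<noteq> wdeg E (\<lambda>v. f (Inl v)) (\<lambda>e. f (Inr e)) v"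
        using fC unfolding C_def D_def by auto
    qed
  qed
qed

end
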